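(* Let $n\ge2$ be an integer and $\lambda\in(2n-1,2n)$. Let $\phi:[0,1]\to[0,1]$ be non-increasing with $\phi(0)=1$, continuous on $[0,1]$, differentiable on $(0,1)$, non-vanishing on $(0,1)$, and such that $\phi'/\phi$ is non-increasing on $(0,1)$. Then the function $p_0:[0,n-1]\to\mathbb{R}$, \[ p_0(l)=\frac{\phi\left(\frac{2l+1}{\lambda}\right)}{\phi\left(\frac{2l}{\lambda}\right)}, \] is non-increasing.
   Context: "Decreasing" in the paper is used in the wide sense (non-increasing). *)

theory Defs
  imports "HOL-Analysis.Analysis"
begin

end

theory Submission
  imports Defs
begin

theorem mainTheorem13:
  fixes n :: nat and lam :: real and \<phi> :: "real \<Rightarrow> real"
  assumes "n \<ge> 2"
    and "2 * real n - 1 < lam" and "lam < 2 * real n"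
    and "\<phi> ` {0..1} \<subseteq> {0..1}"
    and "\<And>x y. 0 \<le> x \<Longrightarrow> x \<le> y \<Longrightarrow> y \<le> 1 \<Longrightarrow> \<phi> y \<le> \<phi> x"
    and "\<phi> 0 = 1"
    and "continuous_on {0..1} \<phi>"
    and "\<phi> differentiable_on {0<..<1}"
    and "\<And>x. 0 < x \<Longrightarrow> x < 1 \<Longrightarrow> \<phi> x \<noteq> 0"
    and "\<And>x y. 0 < x \<Longrightarrow> x \<le> y \<Longrightarrow> y < 1 \<Longrightarrow>
           deriv \<phi> y / \<phi> y \<le> deriv \<phi> x / \<phi> x"
  shows "\<forall>l1 l2. 0 \<le> l1 \<and> l1 \<le> l2 \<and> l2 \<le> real n - 1 \<longrightarrow>
           \<phi> ((2 * l2 + 1) / lam) / \<phi> ((2 * l2) / lam)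
             \<le> \<phi> ((2 * l1 + 1) / lam) / \<phi> ((2 * l1) / lam)"
proof (intro allI impI)
  fix l1 l2 :: real
  assume l: "0 \<le> l1 \<and> l1 \<le> l2 \<and> l2 \<le> real n - 1"
  have lam0: "lam > 0" using assms(1,2) by simp
  have pos: "\<phi> t > 0" if "0 \<le> t" "t < 1" for t
  proof (cases "t = 0")
    case True then show ?thesis using assms(6) by simp
  next
    case False
    have "t \<in> {0..1}" using that by auto
    then have "\<phi> t \<in> {0..1}" using assms(4) by blast
    then show ?thesis using assms(9)[of t] that False by force
  qed
  have der: "DERIV \<phi> t :> deriv \<phi> t" if "0 < t" "t < 1" for t
  proof -
    have "\<phi> differentiable at t"
      using assms(8) that by (simp add: differentiable_on_eq_differentiable_at)
    then show ?thesis by (simp add: DERIV_deriv_iff_real_differentiable)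
  qed
  define h where "h = 1 / lam"
  define x where "x = 2 * l1 / lam"
  define y where "y = 2 * l2 / lam"
  have h0: "h > 0" using lam0 h_def by simp
  have x0: "0 \<le> x" using l lam0 x_def by simp
  have xy: "x \<le> y" using l lam0 x_def y_def by (simp add: divide_right_mono)
  have yh: "y + h < 1"
  proof -
    have "2 * l2 + 1 < lam" using l assms(2) by linarith
    then have "(2 * l2 + 1) / lam < 1" using lam0 by simp
    then show ?thesis using y_def h_def by (simp add: add_divide_distrib)
  qed
  define F where "F t = ln (\<phi> (t + h)) - ln (\<phi> t)" for t
  have Fle: "F y \<le> F x"
  proof (cases "x = y")
    case True then show ?thesis by simp
  next
    case False
    then have lt: "x < y" using xy by simp
    have cphi: "continuous_on {x..y + h} \<phi>"
      using assms(7) by (rule continuous_on_subset) (use x0 yh in auto)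
    have c1: "continuous_on {x..y} (\<lambda>t. \<phi> (t + h))"
      by (rule continuous_on_compose2[OF cphi]) (auto intro!: continuous_intros simp: h0 less_imp_le)
    have c2: "continuous_on {x..y} \<phi>"
      using cphi by (rule continuous_on_subset) (use h0 in auto)
    have cF: "continuous_on {x..y} F"
      unfolding F_def
      using x0 yh h0
      by (intro continuous_intros c1 c2) (smt (verit) atLeastAtMost_iff pos)+
    have dF: "DERIV F t :> deriv \<phi> (t + h) / \<phi> (t + h) - deriv \<phi> t / \<phi> t"
      if "x < t" "t < y" for t
    proof -
      have t0: "0 < t" "t + h < 1" "t < 1" using that x0 yh h0 by auto
      have d1: "DERIV (\<lambda>t. \<phi> (t + h)) t :> deriv \<phi> (t + h)"
      proof -
        have a: "DERIV \<phi> (t + h) :> deriv \<phi> (t + h)" using der[of "t + h"] t0 h0 by auto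
        have b: "DERIV (\<lambda>t. t + h) t :> 1" by (auto intro!: derivative_eq_intros)
        show ?thesis using DERIV_chain2[OF a b] by simp
      qed
      show ?thesis unfolding F_def
        using t0 h0 pos[of t] pos[of "t+h"]
        by (auto intro!: derivative_eq_intros d1 der simp: field_simps)
    qed
    obtain L z where z: "x < z" "z < y" "DERIV F z :> L" "F y - F x = (y - x) * L"
      using MVT[OF lt cF] dF by (meson real_differentiable_def)
    have "L = deriv \<phi> (z + h) / \<phi> (z + h) - deriv \<phi> z / \<phi> z"
      using DERIV_unique[OF z(3) dF[OF z(1,2)]] .
    moreover have "deriv \<phi> (z + h) / \<phi> (z + h) \<le> deriv \<phi> z / \<phi> z"
      using assms(10)[of z "z + h"] z x0 yh h0 by auto
    ultimately have "L \<le> 0" by simp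
    then show ?thesis using z(4) lt by (smt (verit) mult_nonneg_nonpos)
  qed
  have e1: "(2 * l2 + 1) / lam = y + h" "(2 * l2) / lam = y"
    "(2 * l1 + 1) / lam = x + h" "(2 * l1) / lam = x"
    using x_def y_def h_def by (auto simp: add_divide_distrib)
  have py: "\<phi> y > 0" "\<phi> (y+h) > 0" "\<phi> x > 0" "\<phi> (x+h) > 0"
    using pos x0 xy yh h0 by auto
  have "\<phi> (y + h) / \<phi> y = exp (F y)" unfolding F_def using py
    by (simp add: exp_diff)
  also have "\<dots> \<le> exp (F x)" using Fle by simp
  also have "\<dots> = \<phi> (x + h) / \<phi> x" unfolding F_def using py
    by (simp add: exp_diff)
  finally show "\<phi> ((2 * l2 + 1) / lam) / \<phi> ((2 * l2) / lam)
             \<le> \<phi> ((2 * l1 + 1) / lam) / \<phi> ((2 * l1) / lam)" using e1 by simp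
qed

end
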